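(* Let $f,\beta_{(-1)},\beta_{(0)},\beta_{(1)}\in\mathbb{C}[x]$ be nonzero polynomials satisfying \[ f(x+1)\beta_{(1)}(x)+f(x)\beta_{(0)}(x)+f(x-1)\beta_{(-1)}(x)=0. \] Let $d_{f}=\deg(f)$, $d=\max\{\deg(\beta_{(i)}) : i=-1,0,1\}$, and write $\beta_{(i)}(x)=\sum_{j=0}^{d}\beta_{(i)}^{(j)}x^{j}$ with $\beta_{(i)}^{(j)}\in\mathbb{C}$ (with the convention $\beta_{(i)}^{(j)}=0$ for $j<0$). Then: (1) $\beta_{(-1)}^{(d)}+\beta_{(0)}^{(d)}+\beta_{(1)}^{(d)}=0$; in particular at least two of the $\beta_{(i)}$ have degree $d$. (2) If $\beta_{(-1)}^{(d)}-\beta_{(1)}^{(d)}\neq0$, then \[ d_{f}=\frac{\beta_{(-1)}^{(d-1)}+\beta_{(0)}^{(d-1)}+\beta_{(1)}^{(d-1)}}{\beta_{(-1)}^{(d)}-\beta_{(1)}^{(d)}}; \] in particular this expression is a (nonnegative) integer. (3) If $\beta_{(-1)}^{(d)}-\beta_{(1)}^{(d)}=0$, then $\beta_{(-1)}^{(d)}+\beta_{(1)}^{(d)}\neq0$ and \[ \left(\beta_{(-1)}^{(d-2)}+\beta_{(0)}^{(d-2)}+\beta_{(1)}^{(d-2)}\right)+d_{f}\left(-\beta_{(-1)}^{(d-1)}+\beta_{(1)}^{(d-1)}\right)+\binom{d_{f}}{2}\left(\beta_{(-1)}^{(d)}+\beta_{(1)}^{(d)}\right)=0, \] which is a nontrivial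 quadratic equation in $d_{f}$. *)

theory Defs
  imports Complex_Main "HOL-Computational_Algebra.Polynomial"
begin

definition cf :: "complex poly \<Rightarrow> int \<Rightarrow> complex" where
  "cf p j = (if j < 0 then 0 else coeff p (nat j))"

end

theory Submission imports Defs begin

lemma cf_nat[simp]: "cf p (int j) = coeff p j" by (simp add: cf_def)
lemma cf_neg: "j < 0 \<Longrightarrow> cf p j = 0" by (simp add: cf_def)
lemma cf_big: "int (degree p) < j \<Longrightarrow> cf p j = 0"
  by (simp add: cf_def coeff_eq_0 nat_less_iff)

lemma cf_mult:
  fixes p q :: "complex poly"
  assumes "degree p \<le> m" "degree q \<le> e"
  shows "cf (p*q) N = (\<Sum>i\<in>{N - int e..int m}. cf p i * cf q (N - i))"
proof (cases "N < 0")
  case True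
  have "(\<Sum>i\<in>{N - int e..int m}. cf p i * cf q (N - i)) = 0"
  proof (rule sum.neutral, rule ballI)
    fix i assume "i \<in> {N - int e..int m}"
    show "cf p i * cf q (N - i) = 0"
    proof (cases "i < 0")
      case True then show ?thesis by (simp add: cf_neg)
    next
      case False then have "N - i < 0" using \<open>N < 0\<close> by linarith
      then show ?thesis by (simp add: cf_neg)
    qed
  qed
  then show ?thesis using True by (simp add: cf_neg)
next
  case False
  define g where "g i = cf p i * cf q (N - i)" for i
  have "cf (p*q) N = coeff (p*q) (nat N)" using False by (simp add: cf_def)
  also have "\<dots> = (\<Sum>i\<le>nat N. coeff p i * coeff q (nat N - i))" by (rule coeff_mult)
  also have "\<dots> = (\<Sum>i\<le>nat N. g (int i))"
  proof (rule sum.cong)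
    fix i assume "i \<in> {..nat N}"
    then have "N - int i = int (nat N - i)" using False by auto
    then have "g (int i) = cf p (int i) * cf q (int (nat N - i))" unfolding g_def by metis
    then show "coeff p i * coeff q (nat N - i) = g (int i)" by (simp only: cf_nat)
  qed simp
  also have "\<dots> = sum g {0..N}"
    by (rule sym, rule sum.reindex_bij_witness[of _ int nat]) (use False in auto)
  also have "\<dots> = sum g {min 0 (N - int e)..max N (int m)}"
    by (rule sum.mono_neutral_left) (auto simp: g_def cf_neg)
  also have "\<dots> = sum g {N - int e..int m}"
  proof (rule sum.mono_neutral_right)
    show "\<forall>i\<in>{min 0 (N - int e)..max N (int m)} - {N - int e..int m}. g i = 0"
    proof
      fix i assume "i \<in> {min 0 (N - int e)..max N (int m)} - {N - int e..int m}"
      then have "i < N - int e \<or> i > int m" by auto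
      then show "g i = 0"
      proof
        assume "i < N - int e"
        then have "cf q (N - i) = 0" using assms(2) by (intro cf_big) linarith
        then show ?thesis by (simp add: g_def)
      next
        assume "i > int m"
        then have "cf p i = 0" using assms(1) by (intro cf_big) linarith
        then show ?thesis by (simp add: g_def)
      qed
    qed
  qed auto
  finally show ?thesis by (simp add: g_def)
qed

lemma cf_pCons: "cf (pCons a g) j = (if j = 0 then a else cf g (j-1))"
  by (auto simp: cf_def coeff_pCons split: nat.splits) (auto simp: nat_diff_distrib')

lemma cf_shift_step:
  fixes g :: "complex poly"
  shows "cf (pcompose (pCons a g) [:c,1:]) j = (if j = 0 then a else 0) + c * cf (pcompose g [:c,1:]) j + cf (pcompose g [:c,1:]) (j - 1)"
proof -
  have "pcompose (pCons a g) [:c,1:] = [:a:] + [:c,1:] * pcompose g [:c,1:]"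
    by (simp add: pcompose_pCons)
  also have "[:c,1:] * pcompose g [:c,1:] = smult c (pcompose g [:c,1:]) + pCons 0 (pcompose g [:c,1:])"
    by (simp add: mult_pCons_left)
  finally show ?thesis
    by (auto simp: cf_def coeff_pCons split: nat.splits) (auto simp: nat_diff_distrib')
qed

lemma cf_shift:
  fixes p :: "complex poly"
  assumes "degree p \<le> n"
  shows "cf (pcompose p [:c,1:]) (int n) = cf p n \<and>
    cf (pcompose p [:c,1:]) (int n - 1) = cf p (int n - 1) + of_nat n * c * cf p n \<and>
    cf (pcompose p [:c,1:]) (int n - 2) = cf p (int n - 2) + (of_nat n - 1) * c * cf p (int n - 1)
        + of_nat n * (of_nat n - 1) / 2 * c^2 * cf p n"
  using assms
proof (induction p arbitrary: n)
  case 0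
  then show ?case by (simp add: cf_def)
next
  case (pCons a g)
  show ?case
  proof (cases "n = 0")
    case True
    then have "g = 0" using pCons.prems pCons.hyps by (auto split: if_splits)
    then show ?thesis using True by (simp add: cf_shift_step cf_pCons cf_def)
  next
    case False
    then obtain m where n: "n = Suc m" by (cases n) auto
    have dg: "degree g \<le> m" using pCons.prems n pCons.hyps by (auto split: if_splits)
    note IH = pCons.IH[OF dg]
    have h0: "cf (pcompose g [:c,1:]) (int m + 1) = 0"
      by (rule cf_big) (use dg in \<open>simp add: degree_pcompose\<close>)
    have e1: "int n = int m + 1" "int n - 1 = int m" "int n - 2 = int m - 1" "int m + 1 - 1 = int m"
      "int m - 1 - 1 = int m - 2"
      using n by auto
    have ne: "int m + 1 \<noteq> 0" by simp
    show ?thesis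
      unfolding e1 cf_shift_step cf_pCons using IH h0 ne n
      by (auto simp: field_simps power2_eq_square cf_neg)
  qed
qed

lemma cf_add: "cf (p + q) j = cf p j + cf q j" by (simp add: cf_def)

lemma sum3: "(\<Sum>i\<in>{x - 2..x::int}. g i) = g (x - 2) + g (x - 1) + g x"
proof -
  have "{x - 2..x} = {x - 2, x - 1, x}" by auto
  then show ?thesis by (simp add: add.assoc)
qed
lemma sum2: "(\<Sum>i\<in>{x - 1..x::int}. g i) = g (x - 1) + g x"
proof -
  have "{x - 1..x} = {x - 1, x}" by auto
  then show ?thesis by simp
qed

lemma cf_mult0:
  fixes p q :: "complex poly"
  assumes "degree p \<le> m" "degree q \<le> e"
  shows "cf (p*q) (int m + int e) = cf p (int m) * cf q (int e)"
proof -
  have "int m + int e - int e = int m" by simp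
  then show ?thesis using cf_mult[OF assms, of "int m + int e"] by simp
qed

lemma cf_mult1:
  fixes p q :: "complex poly"
  assumes "degree p \<le> m" "degree q \<le> e"
  shows "cf (p*q) (int m + int e - 1) = cf p (int m - 1) * cf q (int e) + cf p (int m) * cf q (int e - 1)"
proof -
  have i: "int m + int e - 1 - int e = int m - 1" by simp
  have j: "int m + int e - 1 - (int m - 1) = int e" "int m + int e - 1 - int m = int e - 1" by simp_all
  show ?thesis using cf_mult[OF assms, of "int m + int e - 1"] unfolding i sum2 j by simp
qed

lemma cf_mult2:
  fixes p q :: "complex poly"
  assumes "degree p \<le> m" "degree q \<le> e"
  shows "cf (p*q) (int m + int e - 2) = cf p (int m - 2) * cf q (int e)
     + cf p (int m - 1) * cf q (int e - 1) + cf p (int m) * cf q (int e - 2)"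
proof -
  have i: "int m + int e - 2 - int e = int m - 2" by simp
  have j: "int m + int e - 2 - (int m - 2) = int e" "int m + int e - 2 - (int m - 1) = int e - 1"
     "int m + int e - 2 - int m = int e - 2" by simp_all
  show ?thesis using cf_mult[OF assms, of "int m + int e - 2"] unfolding i sum3 j by simp
qed

lemma choose2_complex: "(of_nat (n choose 2) :: complex) = of_nat n * (of_nat n - 1) / 2"
proof (induction n)
  case 0
  then show ?case by simp
next
  case (Suc n)
  have h: "Suc n choose Suc 1 = (n choose 1) + (n choose Suc 1)" by (rule binomial_Suc_Suc)
  have "Suc n choose 2 = (n choose 2) + n" using h unfolding Suc_1 choose_one by (simp only: add.commute)
  then have "(of_nat (Suc n choose 2) :: complex) = of_nat (n choose 2) + of_nat n" by (simp only: of_nat_add)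
  then show ?case unfolding Suc by (simp add: field_simps)
qed

lemma cf_top_iff:
  fixes b :: "complex poly"
  assumes "b \<noteq> 0" "degree b \<le> d"
  shows "cf b (int d) \<noteq> 0 \<longleftrightarrow> degree b = d"
proof
  assume "cf b (int d) \<noteq> 0"
  then have "coeff b d \<noteq> 0" by simp
  then have "d \<le> degree b" by (rule le_degree)
  then show "degree b = d" using assms by simp
next
  assume "degree b = d"
  then show "cf b (int d) \<noteq> 0" using assms leading_coeff_neq_0[of b] by simp
qed

theorem lemma29:
  fixes f bm1 b0 b1 :: "complex poly" and d :: nat
  assumes "f \<noteq> 0" "bm1 \<noteq> 0" "b0 \<noteq> 0" "b1 \<noteq> 0"
    and rec: "\<forall>x::complex. poly f (x + 1) * poly b1 x + poly f x * poly b0 x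
                 + poly f (x - 1) * poly bm1 x = 0"
    and d_def: "d = max (degree bm1) (max (degree b0) (degree b1))"
  shows "(cf bm1 d + cf b0 d + cf b1 d = 0
          \<and> ((degree bm1 = d \<and> degree b0 = d) \<or> (degree bm1 = d \<and> degree b1 = d)
             \<or> (degree b0 = d \<and> degree b1 = d)))
       \<and> (cf bm1 d - cf b1 d \<noteq> 0 \<longrightarrow>
            of_nat (degree f) = (cf bm1 (int d - 1) + cf b0 (int d - 1) + cf b1 (int d - 1))
                                / (cf bm1 d - cf b1 d))
       \<and> (cf bm1 d - cf b1 d = 0 \<longrightarrow>
            cf bm1 d + cf b1 d \<noteq> 0 \<and>
            (cf bm1 (int d - 2) + cf b0 (int d - 2) + cf b1 (int d - 2))
            + of_nat (degree f) * (- cf bm1 (int d - 1) + cf b1 (int d - 1))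
            + of_nat (degree f choose 2) * (cf bm1 d + cf b1 d) = 0)"
proof -
  define n where "n = degree f"
  define E where "E = pcompose f [:1,1:]"
  define F where "F = pcompose f [:-1,1:]"
  define a where "a = cf f n"
  have a0: "a \<noteq> 0" using assms(1) by (simp add: a_def n_def)
  have dE: "degree E \<le> n" by (simp add: E_def n_def degree_pcompose)
  have dF: "degree F \<le> n" by (simp add: F_def n_def degree_pcompose)
  have df: "degree f \<le> n" by (simp add: n_def)
  have d1: "degree b1 \<le> d" and d0: "degree b0 \<le> d" and dm: "degree bm1 \<le> d"
    using d_def by auto
  have "poly (E * b1 + f * b0 + F * bm1) = poly 0"
  proof
    fix x
    show "poly (E * b1 + f * b0 + F * bm1) x = poly 0 x"
      using rec[rule_format, of x] by (simp add: E_def F_def poly_pcompose add.commute)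
  qed
  then have P0: "E * b1 + f * b0 + F * bm1 = 0" by (simp add: poly_eq_poly_eq_iff)
  have eqk: "cf (E * b1) j + cf (f * b0) j + cf (F * bm1) j = 0" for j
    using P0 by (metis cf_add cf_def coeff_0)
  note SE = cf_shift[OF df, of 1, folded E_def]
  note SF = cf_shift[OF df, of "-1", folded F_def]
  define f1 where "f1 = cf f (int n - 1)"
  define f2 where "f2 = cf f (int n - 2)"
  define C :: complex where "C = of_nat n * (of_nat n - 1) / 2"
  have SE0: "cf E n = a" and SE1: "cf E (int n - 1) = f1 + of_nat n * a"
    and SE2: "cf E (int n - 2) = f2 + (of_nat n - 1) * f1 + C * a"
    using SE by (simp_all add: a_def f1_def f2_def C_def)
  have SF0: "cf F n = a" and SF1: "cf F (int n - 1) = f1 - of_nat n * a"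
    and SF2: "cf F (int n - 2) = f2 - (of_nat n - 1) * f1 + C * a"
    using SF by (simp_all add: a_def f1_def f2_def C_def ring_distribs)
  have e0: "a * cf b1 d + a * cf b0 d + a * cf bm1 d = 0"
    using eqk[of "int n + int d"] unfolding cf_mult0[OF dE d1] cf_mult0[OF df d0] cf_mult0[OF dF dm]
      SE0 SF0 a_def[symmetric] .
  then have "a * (cf bm1 d + cf b0 d + cf b1 d) = 0" by (simp add: algebra_simps)
  then have S0: "cf bm1 d + cf b0 d + cf b1 d = 0" using a0 by simp
  have e1: "(f1 + of_nat n * a) * cf b1 d + a * cf b1 (int d - 1) + (f1 * cf b0 d + a * cf b0 (int d - 1))
     + ((f1 - of_nat n * a) * cf bm1 d + a * cf bm1 (int d - 1)) = 0"
    using eqk[of "int n + int d - 1"] unfolding cf_mult1[OF dE d1] cf_mult1[OF df d0] cf_mult1[OF dF dm]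
      SE0 SE1 SF0 SF1 a_def[symmetric] f1_def[symmetric] .
  have "a * (cf bm1 (int d - 1) + cf b0 (int d - 1) + cf b1 (int d - 1) - of_nat n * (cf bm1 d - cf b1 d))
     = (f1 + of_nat n * a) * cf b1 d + a * cf b1 (int d - 1) + (f1 * cf b0 d + a * cf b0 (int d - 1))
     + ((f1 - of_nat n * a) * cf bm1 d + a * cf bm1 (int d - 1)) - f1 * (cf bm1 d + cf b0 d + cf b1 d)"
    by algebra
  also have "\<dots> = 0" unfolding e1 S0 by simp
  finally have S1: "cf bm1 (int d - 1) + cf b0 (int d - 1) + cf b1 (int d - 1) = of_nat n * (cf bm1 d - cf b1 d)"
    using a0 by simp
  have e2: "(f2 + (of_nat n - 1) * f1 + C * a) * cf b1 d
      + (f1 + of_nat n * a) * cf b1 (int d - 1) + a * cf b1 (int d - 2)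
      + (f2 * cf b0 d + f1 * cf b0 (int d - 1) + a * cf b0 (int d - 2))
      + ((f2 - (of_nat n - 1) * f1 + C * a) * cf bm1 d
         + (f1 - of_nat n * a) * cf bm1 (int d - 1) + a * cf bm1 (int d - 2)) = 0"
    using eqk[of "int n + int d - 2"] unfolding cf_mult2[OF dE d1] cf_mult2[OF df d0] cf_mult2[OF dF dm]
      SE0 SE1 SE2 SF0 SF1 SF2 a_def[symmetric] f1_def[symmetric] f2_def[symmetric] .
  have "a * ((cf bm1 (int d - 2) + cf b0 (int d - 2) + cf b1 (int d - 2))
            + of_nat n * (- cf bm1 (int d - 1) + cf b1 (int d - 1))
            + C * (cf bm1 d + cf b1 d))
     = ((f2 + (of_nat n - 1) * f1 + C * a) * cf b1 d
      + (f1 + of_nat n * a) * cf b1 (int d - 1) + a * cf b1 (int d - 2)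
      + (f2 * cf b0 d + f1 * cf b0 (int d - 1) + a * cf b0 (int d - 2))
      + ((f2 - (of_nat n - 1) * f1 + C * a) * cf bm1 d
         + (f1 - of_nat n * a) * cf bm1 (int d - 1) + a * cf bm1 (int d - 2)))
      - f2 * (cf bm1 d + cf b0 d + cf b1 d) - f1 * (cf bm1 (int d - 1) + cf b0 (int d - 1) + cf b1 (int d - 1))
      - (of_nat n - 1) * f1 * (cf b1 d - cf bm1 d)"
    by algebra
  note eqS2 = this
  have S2: "cf bm1 d - cf b1 d = 0 \<Longrightarrow> (cf bm1 (int d - 2) + cf b0 (int d - 2) + cf b1 (int d - 2))
            + of_nat n * (- cf bm1 (int d - 1) + cf b1 (int d - 1))
            + C * (cf bm1 d + cf b1 d) = 0"
  proof -
    assume H: "cf bm1 d - cf b1 d = 0"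
    then have H': "cf b1 d - cf bm1 d = 0" by simp
    have "a * ((cf bm1 (int d - 2) + cf b0 (int d - 2) + cf b1 (int d - 2))
            + of_nat n * (- cf bm1 (int d - 1) + cf b1 (int d - 1))
            + C * (cf bm1 d + cf b1 d)) = 0"
      unfolding eqS2 e2 S0 S1 H H' by simp
    then show ?thesis using a0 by simp
  qed
  have i1: "cf b1 d \<noteq> 0 \<longleftrightarrow> degree b1 = d" by (rule cf_top_iff[OF assms(4) d1])
  have i0: "cf b0 d \<noteq> 0 \<longleftrightarrow> degree b0 = d" by (rule cf_top_iff[OF assms(3) d0])
  have im: "cf bm1 d \<noteq> 0 \<longleftrightarrow> degree bm1 = d" by (rule cf_top_iff[OF assms(2) dm])
  have one: "degree bm1 = d \<or> degree b0 = d \<or> degree b1 = d" using d_def by linarith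
  have part1: "(degree bm1 = d \<and> degree b0 = d) \<or> (degree bm1 = d \<and> degree b1 = d)
             \<or> (degree b0 = d \<and> degree b1 = d)"
  proof -
    have "\<not> (cf bm1 d = 0 \<and> cf b0 d = 0) \<and> \<not> (cf bm1 d = 0 \<and> cf b1 d = 0) \<and> \<not> (cf b0 d = 0 \<and> cf b1 d = 0)"
      using S0 one i1 i0 im by (auto simp: add_eq_0_iff2)
    then show ?thesis using i1 i0 im by blast
  qed
  have part2: "cf bm1 d - cf b1 d \<noteq> 0 \<longrightarrow>
            of_nat (degree f) = (cf bm1 (int d - 1) + cf b0 (int d - 1) + cf b1 (int d - 1))
                                / (cf bm1 d - cf b1 d)"
    using S1 by (simp add: n_def field_simps)
  have part3: "cf bm1 d - cf b1 d = 0 \<longrightarrow> cf bm1 d + cf b1 d \<noteq> 0"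
  proof
    assume H: "cf bm1 d - cf b1 d = 0"
    show "cf bm1 d + cf b1 d \<noteq> 0"
    proof
      assume "cf bm1 d + cf b1 d = 0"
      with H have "cf bm1 d = 0" "cf b1 d = 0" by (auto simp: add_eq_0_iff2)
      moreover then have "cf b0 d = 0" using S0 by simp
      ultimately show False using one i1 i0 im by blast
    qed
  qed
  show ?thesis using S0 part1 part2 part3 S2 by (simp add: choose2_complex C_def n_def)
qed

end
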